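(* Let $\Delta>0$, $h>0$, $N\in\mathbb{N}$, $\gamma>0$, $\sigma^2>0$ and real numbers $\eta_1,\dots,\eta_N$ be given. Let $u:\mathbb{R}\to\mathbb{R}$ be a known deterministic causal input ($u(t)=0$ for $t<0$). Let $g$ be a zero-mean Gaussian process on $[0,\infty)$ with covariance $\mathbb{E}\{g(t)g(s)\}=k(t,s)/\gamma$, and let $v(\Delta),\dots,v(N\Delta)$ be i.i.d. $\mathcal{N}(0,\sigma^2)$ random variables independent of $g$. Set $z(i\Delta)=(g*u)(i\Delta)+v(i\Delta)$, where $(g*u)(t)=\int_0^\infty g(\tau)u(t-\tau)\,\mathrm{d}\tau$, and suppose the observed data is the event $\mathcal{Y}_{1:N}=\{z(i\Delta)\in[\eta_i,\eta_i+h),\ i=1,\dots,N\}$. Let $\{t_i\}_{i=1}^{N+M}$ be finitely many real numbers with $t_i=i\Delta$ for $i=1,\dots,N$ and $t_{N+1},\dots,t_{N+M}$ arbitrary, and define $\mathbf{x}=[(g*u)(t_1),\dots,(g*u)(t_{N+M})]^\top$; assume the (Gaussian) covariance matrix of $\mathbf{x}$ is nonsingular. Let $\breve{g}$ be a minimizer over $g\in\mathcal{G}$ of $$-2\sum_{i=1}^{N}\log\left[\int_{\eta_i}^{\eta_i+h}\exp\Big(-\tfrac{1}{2\sigma^2}\big[z_i-(g*u)(i\Delta)\big]^2\Big)\mathrm{d}z_i\right]+\gamma\|g\|_{\mathcal{G}}^2 .$$ Then the maximum a posteriori (MAP) estimate of $\mathbf{x}$ given $\mathcal{Y}_{1:N}$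 is $\hat{\mathbf{x}}=[(\breve g*u)(t_1),\dots,(\breve g*u)(t_{N+M})]^\top$.
   Context: $k:\mathbb{R}_+\times\mathbb{R}_+\to\mathbb{R}$ is a positive-definite kernel and $\mathcal{G}$ is the reproducing kernel Hilbert space (RKHS) it induces, with norm $\|\cdot\|_{\mathcal{G}}$. It is assumed that $u$ and $\mathcal{G}$ are such that each evaluation $g\mapsto (g*u)(t)$ (for the relevant $t$) is a bounded linear functional on $\mathcal{G}$. The kernel matrix $\mathbf{K}\in\mathbb{R}^{N\times N}$ has entries $\mathbf{K}_{ij}=\int_0^\infty\int_0^\infty u(i\Delta-\xi)u(j\Delta-\tau)k(\xi,\tau)\,\mathrm{d}\tau\,\mathrm{d}\xi$ and is assumed nonsingular. *)

theory Defs
  imports "HOL-Analysis.Analysis" "Jordan_Normal_Form.Determinant"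
begin

definition pos_def_kernel :: "(real \<Rightarrow> real \<Rightarrow> real) \<Rightarrow> bool" where
  "pos_def_kernel k \<longleftrightarrow>
     (\<forall>x y. 0 \<le> x \<longrightarrow> 0 \<le> y \<longrightarrow> k x y = k y x) \<and>
     (\<forall>(n::nat) (c::nat \<Rightarrow> real) (x::nat \<Rightarrow> real). (\<forall>i<n. 0 \<le> x i) \<longrightarrow>
        0 \<le> (\<Sum>i<n. \<Sum>j<n. c i * c j * k (x i) (x j)))"

text \<open>The Hilbert space 'h, whose elements are realised as functions on [0,inf) via ev,
  is the RKHS induced by k: the kernel sections belong to it, the reproducing property
  holds, and the kernel sections span a dense subspace.\<close>
definition is_rkhs :: "(real \<Rightarrow> real \<Rightarrow> real) \<Rightarrow> ('h::{real_inner,complete_space} \<Rightarrow> real \<Rightarrow> real) \<Rightarrow> bool" where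
  "is_rkhs k ev \<longleftrightarrow>
     (\<exists>kf :: real \<Rightarrow> 'h.
        (\<forall>x y. 0 \<le> x \<longrightarrow> 0 \<le> y \<longrightarrow> ev (kf x) y = k y x) \<and>
        (\<forall>g x. 0 \<le> x \<longrightarrow> ev g x = inner g (kf x)) \<and>
        closure (span (kf ` {0..})) = UNIV)"

definition conv :: "('h \<Rightarrow> real \<Rightarrow> real) \<Rightarrow> (real \<Rightarrow> real) \<Rightarrow> 'h \<Rightarrow> real \<Rightarrow> real" where
  "conv ev u g t = (LINT \<tau>:{0..}|lborel. ev g \<tau> * u (t - \<tau>))"

text \<open>Covariance matrix of x = [(g*u)(t_1),...,(g*u)(t_n)] when g is a zero-mean GP with
  covariance k/gamma. Row/column j (0-based) corresponds to t_(j+1).\<close>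
definition cov_mat :: "real \<Rightarrow> (real \<Rightarrow> real \<Rightarrow> real) \<Rightarrow> (real \<Rightarrow> real) \<Rightarrow> (nat \<Rightarrow> real) \<Rightarrow> nat \<Rightarrow> real mat" where
  "cov_mat \<gamma> k u t n = mat n n (\<lambda>(j,l). (1/\<gamma>) *
      (LINT \<xi>:{0..}|lborel. LINT \<tau>:{0..}|lborel. u (t (j+1) - \<xi>) * u (t (l+1) - \<tau>) * k \<xi> \<tau>))"

definition mat_inv :: "real mat \<Rightarrow> real mat" where
  "mat_inv A = (SOME B. B \<in> carrier_mat (dim_row A) (dim_row A) \<and> inverts_mat A B \<and> inverts_mat B A)"

definition gauss_density :: "real mat \<Rightarrow> real vec \<Rightarrow> real" where
  "gauss_density S x = exp (- (x \<bullet> (mat_inv S *\<^sub>v x)) / 2) / sqrt ((2*pi) ^ dim_row S * det S)"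

text \<open>Likelihood P(Y_{1:N} | x): z_i = x_i + v_i, v_i iid N(0,sigma^2), z_i in [eta_i, eta_i+h).\<close>
definition likelihood :: "nat \<Rightarrow> real \<Rightarrow> real \<Rightarrow> (nat \<Rightarrow> real) \<Rightarrow> real vec \<Rightarrow> real" where
  "likelihood N \<sigma>2 h \<eta> x = (\<Prod>i=1..N.
      (LBINT z:{\<eta> i..<\<eta> i + h}. exp (- (z - x $ (i-1))\<^sup>2 / (2*\<sigma>2)) / sqrt (2*pi*\<sigma>2)))"

text \<open>Posterior density of x given Y_{1:N}, up to the positive constant 1/P(Y_{1:N}).\<close>
definition post_unnorm :: "real mat \<Rightarrow> nat \<Rightarrow> real \<Rightarrow> real \<Rightarrow> (nat \<Rightarrow> real) \<Rightarrow> real vec \<Rightarrow> real" where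
  "post_unnorm S N \<sigma>2 h \<eta> x = gauss_density S x * likelihood N \<sigma>2 h \<eta> x"

definition is_MAP :: "real mat \<Rightarrow> nat \<Rightarrow> real \<Rightarrow> real \<Rightarrow> (nat \<Rightarrow> real) \<Rightarrow> real vec \<Rightarrow> bool" where
  "is_MAP S N \<sigma>2 h \<eta> x \<longleftrightarrow> x \<in> carrier_vec (dim_row S) \<and>
     (\<forall>y \<in> carrier_vec (dim_row S). post_unnorm S N \<sigma>2 h \<eta> y \<le> post_unnorm S N \<sigma>2 h \<eta> x)"

definition crit :: "('h::real_inner \<Rightarrow> real \<Rightarrow> real) \<Rightarrow> (real \<Rightarrow> real) \<Rightarrow> real \<Rightarrow> nat \<Rightarrow> real \<Rightarrow> real \<Rightarrow> real \<Rightarrow> (nat \<Rightarrow> real) \<Rightarrow> 'h \<Rightarrow> real" where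
  "crit ev u \<Delta> N \<gamma> \<sigma>2 h \<eta> g =
     - 2 * (\<Sum>i=1..N. ln (LBINT z:{\<eta> i..<\<eta> i + h}.
              exp (- (z - conv ev u g (real i * \<Delta>))\<^sup>2 / (2*\<sigma>2))))
     + \<gamma> * (norm g)\<^sup>2"

end

theory Submission
  imports Defs
begin


lemma logconc:
  fixes s a b :: real
  assumes s: "s > 0" and ab: "a < b"
  shows "convex_on UNIV (\<lambda>x. - ln (LBINT z:{a..<b}. exp (- (z - x)\<^sup>2 / (2 * s))))"
    and "\<And>x. (LBINT z:{a..<b}. exp (- (z - x)\<^sup>2 / (2 * s))) > 0"
proof -
  define f where "f = (\<lambda>w::real. exp (- w\<^sup>2 / (2 * s)))"
  have fpos: "f w > 0" for w unfolding f_def by simp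
  have fcont: "isCont f w" for w unfolding f_def using s by (intro continuous_intros) auto
  have fder: "(f has_real_derivative (- (w / s) * f w)) (at w)" for w
    unfolding f_def using s
    by (auto intro!: derivative_eq_intros simp: field_simps power2_eq_square)
  obtain F where F: "\<And>x. (F has_vector_derivative f x) (at x)"
    using einterval_antiderivative[of "-\<infinity>" "\<infinity>" f] fcont by auto
  have Fr: "(F has_real_derivative f x) (at x)" for x
    using F[of x] by (simp add: has_real_derivative_iff_has_vector_derivative)
  define I where "I x = F (b - x) - F (a - x)" for x
  have Ieq: "(LBINT z:{a..<b}. exp (- (z - x)\<^sup>2 / (2 * s))) = I x" for x
  proof -
    have "(LBINT z:{a..<b}. exp (- (z - x)\<^sup>2 / (2 * s))) = (LBINT z=a..b. f (z - x))"
      using ab by (subst interval_integral_Ico) (auto simp: f_def)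
    also have "\<dots> = F (b - x) - F (a - x)"
    proof (rule interval_integral_FTC_finite)
      show "continuous_on {min a b..max a b} (\<lambda>z. f (z - x))"
        by (intro continuous_at_imp_continuous_on ballI continuous_intros fcont[THEN isCont_o2[rotated]])
      fix z
      have "((\<lambda>z. F (z - x)) has_real_derivative f (z - x) * 1) (at z)"
        by (rule DERIV_chain2[OF Fr]) (auto intro!: derivative_eq_intros)
      then show "((\<lambda>z. F (z - x)) has_vector_derivative f (z - x)) (at z within {min a b..max a b})"
        by (simp add: has_real_derivative_iff_has_vector_derivative has_vector_derivative_at_within)
    qed
    finally show ?thesis unfolding I_def .
  qed
  have Ipos: "I x > 0" for x
  proof -
    have "F (a - x) < F (b - x)"
    proof (rule DERIV_pos_imp_increasing[where f=F])
      show "a - x < b - x" using ab by simp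
      show "\<And>y. a - x \<le> y \<Longrightarrow> y \<le> b - x \<Longrightarrow> \<exists>z. DERIV F y :> z \<and> z > 0" using Fr fpos by blast
    qed
    then show ?thesis unfolding I_def by simp
  qed
  then show "\<And>x. (LBINT z:{a..<b}. exp (- (z - x)\<^sup>2 / (2 * s))) > 0" using Ieq by simp
  define D1 where "D1 x = f (a - x) - f (b - x)" for x
  define D2 where "D2 x = (a - x) / s * f (a - x) - (b - x) / s * f (b - x)" for x
  have dI: "(I has_real_derivative D1 x) (at x)" for x
  proof -
    have "((\<lambda>x. F (b - x)) has_real_derivative f (b - x) * (- 1)) (at x)"
      by (rule DERIV_chain2[OF Fr]) (auto intro!: derivative_eq_intros)
    moreover have "((\<lambda>x. F (a - x)) has_real_derivative f (a - x) * (- 1)) (at x)"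
      by (rule DERIV_chain2[OF Fr]) (auto intro!: derivative_eq_intros)
    ultimately show ?thesis unfolding I_def D1_def
      by (auto intro!: derivative_eq_intros)
  qed
  have dD1: "(D1 has_real_derivative D2 x) (at x)" for x
  proof -
    have "((\<lambda>x. f (b - x)) has_real_derivative (- ((b - x) / s) * f (b - x)) * (- 1)) (at x)"
      by (rule DERIV_chain2[OF fder]) (auto intro!: derivative_eq_intros)
    moreover have "((\<lambda>x. f (a - x)) has_real_derivative (- ((a - x) / s) * f (a - x)) * (- 1)) (at x)"
      by (rule DERIV_chain2[OF fder]) (auto intro!: derivative_eq_intros)
    ultimately show ?thesis unfolding D1_def D2_def
      by (auto intro!: derivative_eq_intros)
  qed
  have key: "D2 x * I x \<le> (D1 x)\<^sup>2" for x
  proof -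
    define A where "A = a - x"
    define B where "B = b - x"
    have AB: "A < B" using ab unfolding A_def B_def by simp
    have cont1: "continuous_on {A..B} f" by (intro continuous_at_imp_continuous_on ballI fcont)
    have cont2: "continuous_on {A..B} (\<lambda>w. w * f w)"
      by (intro continuous_at_imp_continuous_on ballI continuous_intros fcont)
    have Iint: "I x = (LBINT w=A..B. f w)"
    proof -
      have "(LBINT w=A..B. f w) = F B - F A"
        by (rule interval_integral_FTC_finite)
           (use AB cont1 in \<open>auto simp: min_def max_def has_vector_derivative_at_within F\<close>)
      then show ?thesis unfolding I_def A_def B_def by simp
    qed
    have M1: "(LBINT w=A..B. w * f w) = s * (f A - f B)"
    proof -
      have "(LBINT w=A..B. w * f w) = (- s * f B) - (- s * f A)"
      proof (rule interval_integral_FTC_finite)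
        show "continuous_on {min A B..max A B} (\<lambda>w. w * f w)"
          using cont2 AB by (simp add: min_def max_def)
        fix w
        have "((\<lambda>w. - s * f w) has_real_derivative - s * (- (w / s) * f w)) (at w)"
          by (intro DERIV_cmult fder)
        then show "((\<lambda>w. - s * f w) has_vector_derivative w * f w) (at w within {min A B..max A B})"
          using s by (simp add: has_real_derivative_iff_has_vector_derivative has_vector_derivative_at_within)
      qed
      then show ?thesis by (simp add: algebra_simps)
    qed
    have i1: "set_integrable lborel {A..B} f" by (rule borel_integrable_atLeastAtMost'[OF cont1])
    have i2: "set_integrable lborel {A..B} (\<lambda>w. w * f w)" by (rule borel_integrable_atLeastAtMost'[OF cont2])
    have i3: "set_integrable lborel {A..B} (\<lambda>w. A * f w)"
      by (rule borel_integrable_atLeastAtMost') (intro continuous_intros cont1)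
    have i4: "set_integrable lborel {A..B} (\<lambda>w. B * f w)"
      by (rule borel_integrable_atLeastAtMost') (intro continuous_intros cont1)
    have lo: "A * I x \<le> s * (f A - f B)"
    proof -
      have "(LBINT w:{A..B}. A * f w) \<le> (LBINT w:{A..B}. w * f w)"
        by (rule set_integral_mono[OF i3 i2]) (auto intro!: mult_right_mono less_imp_le[OF fpos])
      then show ?thesis using AB M1 Iint by (simp add: interval_integral_Icc)
    qed
    have hi: "s * (f A - f B) \<le> B * I x"
    proof -
      have "(LBINT w:{A..B}. w * f w) \<le> (LBINT w:{A..B}. B * f w)"
        by (rule set_integral_mono[OF i2 i4]) (auto intro!: mult_right_mono less_imp_le[OF fpos])
      then show ?thesis using AB M1 Iint by (simp add: interval_integral_Icc)
    qed
    have e1: "D2 x * I x * s = A * f A * I x - B * f B * I x"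
      unfolding D2_def A_def B_def using s by (simp add: field_simps)
    have e2: "(D1 x)\<^sup>2 * s = s * (f A - f B) * (f A - f B)"
      unfolding D1_def A_def B_def by (simp add: power2_eq_square)
    have "0 \<le> f A * (s * (f A - f B) - A * I x) + f B * (B * I x - s * (f A - f B))"
      using lo hi fpos[of A] fpos[of B] by (intro add_nonneg_nonneg mult_nonneg_nonneg) auto
    then have "D2 x * I x * s \<le> (D1 x)\<^sup>2 * s" unfolding e1 e2 by (simp add: algebra_simps)
    then show ?thesis using s by simp
  qed
  show "convex_on UNIV (\<lambda>x. - ln (LBINT z:{a..<b}. exp (- (z - x)\<^sup>2 / (2 * s))))"
    unfolding Ieq
  proof (rule f''_ge0_imp_convex[where f'="\<lambda>x. - (D1 x / I x)"
        and f''="\<lambda>x. - ((D2 x * I x - D1 x * D1 x) / (I x * I x))"])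
    fix x
    show "DERIV (\<lambda>x. - ln (I x)) x :> - (D1 x / I x)"
      using Ipos[of x] by (auto intro!: derivative_eq_intros dI simp: field_simps)
    show "DERIV (\<lambda>x. - (D1 x / I x)) x :> - ((D2 x * I x - D1 x * D1 x) / (I x * I x))"
      using Ipos[of x] by (auto intro!: derivative_eq_intros dI dD1 simp: field_simps)
    show "0 \<le> - ((D2 x * I x - D1 x * D1 x) / (I x * I x))"
      using key[of x] Ipos[of x] by (simp add: power2_eq_square divide_nonpos_pos)
  qed auto
qed



lemma riesz:
  fixes L :: "'h::{real_inner,complete_space} \<Rightarrow> real"
  assumes bl: "bounded_linear L"
  shows "\<exists>r. \<forall>g. L g = inner r g"
proof (cases "\<forall>g. L g = 0")
  case True then show ?thesis by (intro exI[of _ 0]) simp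
next
  case False
  interpret L: bounded_linear L by (rule bl)
  from False obtain e where e: "L e \<noteq> 0" by auto
  define C where "C = {g. L g = 1}"
  have eC: "e /\<^sub>R L e \<in> C" using e unfolding C_def by (simp add: L.scale)
  define d2 where "d2 = Inf ((\<lambda>g. (norm g)\<^sup>2) ` C)"
  have bdd: "bdd_below ((\<lambda>g. (norm g)\<^sup>2) ` C)" by (intro bdd_belowI[of _ 0]) auto
  have lower: "d2 \<le> (norm g)\<^sup>2" if "g \<in> C" for g
    unfolding d2_def using that bdd by (intro cInf_lower) auto
  have "\<exists>g. g \<in> C \<and> (norm g)\<^sup>2 < d2 + 1 / (real n + 1)" for n
  proof -
    have "d2 < d2 + 1 / (real n + 1)" by simp
    then have "\<exists>x\<in>(\<lambda>g. (norm g)\<^sup>2) ` C. x < d2 + 1 / (real n + 1)"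
      using cInf_less_iff[of "(\<lambda>g. (norm g)\<^sup>2) ` C"] eC bdd unfolding d2_def by blast
    then show ?thesis by auto
  qed
  then obtain g where gC: "\<And>n. g n \<in> C" and gn: "\<And>n. (norm (g n))\<^sup>2 < d2 + 1 / (real n + 1)"
    by metis
  have par: "(norm (a - b))\<^sup>2 = 2 * (norm a)\<^sup>2 + 2 * (norm b)\<^sup>2 - 4 * (norm ((1/2) *\<^sub>R (a + b)))\<^sup>2"
    for a b :: 'h
    by (simp add: power2_norm_eq_inner inner_add inner_diff inner_commute algebra_simps)
  have mid: "(1/2) *\<^sub>R (g n + g m) \<in> C" for n m
    using gC[of n] gC[of m] unfolding C_def by (simp add: L.scale L.add)
  have dist_bd: "(norm (g n - g m))\<^sup>2 \<le> 2 / (real n + 1) + 2 / (real m + 1)" for n m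
    using par[of "g n" "g m"] lower[OF mid[of n m]] gn[of n] gn[of m] by linarith
  have "Cauchy g"
  proof (rule CauchyI)
    fix \<epsilon> :: real assume \<epsilon>: "\<epsilon> > 0"
    obtain M :: nat where M: "4 / \<epsilon>\<^sup>2 < real M" using reals_Archimedean2 by blast
    have "\<forall>m\<ge>M. \<forall>n\<ge>M. norm (g m - g n) < \<epsilon>"
    proof (intro allI impI)
      fix m n assume mM: "M \<le> m" and nM: "M \<le> n"
      have e2: "\<epsilon>\<^sup>2 > 0" using \<epsilon> by simp
      have "4 < real M * \<epsilon>\<^sup>2" using M e2 by (simp add: field_simps)
      moreover have "(real M + 1) * \<epsilon>\<^sup>2 = real M * \<epsilon>\<^sup>2 + \<epsilon>\<^sup>2" by (simp add: distrib_right)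
      ultimately have "4 < (real M + 1) * \<epsilon>\<^sup>2" using e2 by linarith
      then have Mb: "4 / (real M + 1) < \<epsilon>\<^sup>2"
        by (subst pos_divide_less_eq) (auto simp: mult.commute)
      have "2 / (real m + 1) \<le> 2 / (real M + 1)" using mM by (simp add: frac_le)
      moreover have "2 / (real n + 1) \<le> 2 / (real M + 1)" using nM by (simp add: frac_le)
      ultimately have "(norm (g m - g n))\<^sup>2 < \<epsilon>\<^sup>2" using dist_bd[of m n] Mb by simp
      then show "norm (g m - g n) < \<epsilon>" using power_less_imp_less_base \<epsilon> less_imp_le by blast
    qed
    then show "\<exists>M. \<forall>m\<ge>M. \<forall>n\<ge>M. norm (g m - g n) < \<epsilon>" by blast
  qed
  then obtain g0 where g0: "g \<longlonglongrightarrow> g0" using Cauchy_convergent convergent_def by blast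
  have "(\<lambda>n. L (g n)) \<longlonglongrightarrow> L g0" by (rule L.tendsto[OF g0])
  moreover have "(\<lambda>n. L (g n)) = (\<lambda>n. 1)" using gC unfolding C_def by auto
  ultimately have Lg0: "L g0 = 1" using LIMSEQ_unique tendsto_const by metis
  have "(\<lambda>n. (norm (g n))\<^sup>2) \<longlonglongrightarrow> (norm g0)\<^sup>2" by (intro tendsto_intros g0)
  moreover have "(\<lambda>n. d2 + 1 / (real n + 1)) \<longlonglongrightarrow> d2"
    using LIMSEQ_inverse_real_of_nat_add[of d2] by (simp add: inverse_eq_divide add.commute)
  ultimately have "(norm g0)\<^sup>2 \<le> d2" using gn by (intro LIMSEQ_le) (auto intro: less_imp_le)
  then have minimal: "(norm g0)\<^sup>2 \<le> (norm y)\<^sup>2" if "L y = 1" for y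
    using lower[of y] that unfolding C_def by (meson order_trans mem_Collect_eq)
  have orth: "inner g0 k = 0" if k: "L k = 0" for k
  proof -
    define c where "c = inner g0 k"
    define q where "q = inner k k"
    have q: "q \<ge> 0" unfolding q_def by simp
    define t where "t = - c / (q + 1)"
    have "L (g0 + t *\<^sub>R k) = 1" using Lg0 k by (simp add: L.add L.scale)
    from minimal[OF this] have "inner g0 g0 \<le> inner (g0 + t *\<^sub>R k) (g0 + t *\<^sub>R k)"
      by (simp add: power2_norm_eq_inner)
    then have "0 \<le> 2 * t * c + t * t * q"
      unfolding c_def q_def by (simp add: inner_add inner_commute algebra_simps)
    then have h0: "0 \<le> (q + 1) * (q + 1) * (2 * t * c + t * t * q)"
      using q by simp
    have tq: "(q + 1) * t = - c" using q by (simp add: t_def)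
    have "(q + 1) * (q + 1) * (2 * t * c + t * t * q)
        = 2 * c * (q + 1) * ((q + 1) * t) + ((q + 1) * t) * ((q + 1) * t) * q"
      by (simp add: algebra_simps)
    also have "\<dots> = - 2 * c * c * (q + 1) + c * c * q" unfolding tq by (simp add: algebra_simps)
    finally have "0 \<le> - 2 * c * c * (q + 1) + c * c * q" using h0 by simp
    then have "c * c * (q + 2) \<le> 0" by (simp add: algebra_simps)
    then have "c * c \<le> 0" using q by (simp add: mult_le_0_iff)
    then show ?thesis unfolding c_def by (metis mult_eq_0_iff mult_le_0_iff not_square_less_zero order.antisym zero_le_square)
  qed
  have g0nz: "inner g0 g0 \<noteq> 0" using Lg0 by auto
  show ?thesis
  proof (intro exI allI)
    fix y
    have "L (y - L y *\<^sub>R g0) = 0" using Lg0 by (simp add: L.diff L.scale)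
    from orth[OF this] have "inner g0 y = L y * inner g0 g0" by (simp add: inner_diff_right)
    then show "L y = inner (g0 /\<^sub>R inner g0 g0) y" using g0nz by simp
  qed
qed



lemma gram_entry:
  fixes ev :: "'h::{real_inner,complete_space} \<Rightarrow> real \<Rightarrow> real"
  assumes kernel: "pos_def_kernel k" and rkhs: "is_rkhs k ev"
    and rj: "\<forall>g. conv ev u g sa = inner rj g" and rl: "\<forall>g. conv ev u g sb = inner rl g"
  shows "(LINT \<xi>:{0..}|lborel. LINT \<tau>:{0..}|lborel. u (sa - \<xi>) * u (sb - \<tau>) * k \<xi> \<tau>) = inner rj rl"
proof -
  obtain kf :: "real \<Rightarrow> 'h" where kf1: "\<forall>x y. 0 \<le> x \<longrightarrow> 0 \<le> y \<longrightarrow> ev (kf x) y = k y x"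
    and kf2: "\<forall>g x. 0 \<le> x \<longrightarrow> ev g x = inner g (kf x)"
    using rkhs unfolding is_rkhs_def by blast
  have sym: "k x y = k y x" if "0 \<le> x" "0 \<le> y" for x y
    using kernel that unfolding pos_def_kernel_def by blast
  have inner_eq: "(LINT \<tau>:{0..}|lborel. u (sa - \<xi>) * u (sb - \<tau>) * k \<xi> \<tau>) = u (sa - \<xi>) * ev rl \<xi>"
    if xi: "\<xi> \<in> {0..}" for \<xi>
  proof -
    have "(LINT \<tau>:{0..}|lborel. u (sa - \<xi>) * u (sb - \<tau>) * k \<xi> \<tau>)
        = (LINT \<tau>:{0..}|lborel. u (sa - \<xi>) * (ev (kf \<xi>) \<tau> * u (sb - \<tau>)))"
    proof (rule set_lebesgue_integral_cong)
      show "{0::real..} \<in> sets lborel" by simp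
      show "\<forall>\<tau>. \<tau> \<in> {0..} \<longrightarrow> u (sa - \<xi>) * u (sb - \<tau>) * k \<xi> \<tau> = u (sa - \<xi>) * (ev (kf \<xi>) \<tau> * u (sb - \<tau>))"
        using xi kf1 sym by auto
    qed
    also have "\<dots> = u (sa - \<xi>) * conv ev u (kf \<xi>) sb"
      unfolding conv_def by (rule set_integral_mult_right)
    also have "\<dots> = u (sa - \<xi>) * ev rl \<xi>" using rl kf2 xi by (simp add: inner_commute)
    finally show ?thesis .
  qed
  have "(LINT \<xi>:{0..}|lborel. LINT \<tau>:{0..}|lborel. u (sa - \<xi>) * u (sb - \<tau>) * k \<xi> \<tau>)
      = (LINT \<xi>:{0..}|lborel. ev rl \<xi> * u (sa - \<xi>))"
    by (rule set_lebesgue_integral_cong) (use inner_eq in auto)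
  also have "\<dots> = conv ev u rl sa" unfolding conv_def ..
  also have "\<dots> = inner rj rl" using rj by simp
  finally show ?thesis .
qed

lemma mv_sum:
  fixes A :: "real mat" and v :: "real vec"
  assumes "A \<in> carrier_mat n n" "v \<in> carrier_vec n" "j < n"
  shows "(A *\<^sub>v v) $ j = (\<Sum>i<n. A $$ (j, i) * v $ i)"
  using assms by (auto simp: scalar_prod_def atLeast0LessThan intro!: sum.cong)

lemma sp_sum:
  fixes w v :: "real vec"
  assumes "v \<in> carrier_vec n"
  shows "w \<bullet> v = (\<Sum>i<n. w $ i * v $ i)"
  using assms by (auto simp: scalar_prod_def atLeast0LessThan)

lemma det_pos:
  fixes S :: "real mat"
  assumes S: "S \<in> carrier_mat n n"
    and psd: "\<And>v::real vec. v \<in> carrier_vec n \<Longrightarrow> (\<Sum>i<n. \<Sum>j<n. v $ i * S $$ (i, j) * v $ j) \<ge> 0"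
    and inj: "\<And>v::real vec. v \<in> carrier_vec n \<Longrightarrow> S *\<^sub>v v = 0\<^sub>v n \<Longrightarrow> v = 0\<^sub>v n"
  shows "det S > 0"
proof -
  define M where "M t = mat n n (\<lambda>(i,j). t * S $$ (i,j) + (1 - t) * (if i = j then 1 else 0))" for t :: real
  have Mc: "M t \<in> carrier_mat n n" for t unfolding M_def by simp
  have nz: "det (M t) \<noteq> 0" if t: "0 \<le> t" "t \<le> 1" for t
  proof
    assume "det (M t) = 0"
    then obtain v where v: "v \<in> carrier_vec n" "v \<noteq> 0\<^sub>v n" "M t *\<^sub>v v = 0\<^sub>v n"
      using det_0_iff_vec_prod_zero[OF Mc] by blast
    have Mv: "(\<Sum>j<n. (t * S $$ (i,j) + (1 - t) * (if i = j then 1 else 0)) * v $ j) = 0" if "i < n" for i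
    proof -
      have "(\<Sum>j<n. (t * S $$ (i,j) + (1 - t) * (if i = j then 1 else 0)) * v $ j)
          = (\<Sum>j<n. M t $$ (i,j) * v $ j)" by (rule sum.cong) (auto simp: M_def that)
      also have "\<dots> = (M t *\<^sub>v v) $ i" using mv_sum[OF Mc v(1) that] by simp
      also have "\<dots> = 0" using v(3) that by simp
      finally show ?thesis .
    qed
    have Mv2: "t * (\<Sum>j<n. S $$ (i,j) * v $ j) + (1 - t) * v $ i = 0" if "i < n" for i
    proof -
      have "(\<Sum>j<n. (t * S $$ (i,j) + (1 - t) * (if i = j then 1 else 0)) * v $ j)
          = t * (\<Sum>j<n. S $$ (i,j) * v $ j) + (\<Sum>j<n. (1 - t) * (if i = j then 1 else 0) * v $ j)"
        by (simp only: distrib_right sum.distrib mult.assoc sum_distrib_left[symmetric])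
      also have "(\<Sum>j<n. (1 - t) * (if i = j then 1 else 0) * v $ j) = (1 - t) * v $ i"
        using that by (simp add: if_distrib if_distribR sum.delta cong: if_cong)
      finally show ?thesis using Mv[OF that] by simp
    qed
    show False
    proof (cases "t = 1")
      case True
      then have "S *\<^sub>v v = 0\<^sub>v n"
        using Mv2 mv_sum[OF S v(1)] S by (intro eq_vecI) auto
      then show False using inj v by blast
    next
      case False
      then have t1: "t < 1" using t by simp
      have "0 = (\<Sum>i<n. v $ i * (t * (\<Sum>j<n. S $$ (i,j) * v $ j) + (1 - t) * v $ i))"
        using Mv2 by simp
      also have "\<dots> = (\<Sum>i<n. t * (\<Sum>j<n. v $ i * S $$ (i, j) * v $ j) + (1 - t) * (v $ i * v $ i))"
        by (rule sum.cong[OF refl]) (simp add: sum_distrib_left algebra_simps)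
      also have "\<dots> = t * (\<Sum>i<n. \<Sum>j<n. v $ i * S $$ (i, j) * v $ j) + (1 - t) * (\<Sum>i<n. v $ i * v $ i)"
        by (simp only: sum.distrib sum_distrib_left[symmetric])
      finally have eq0: "0 = t * (\<Sum>i<n. \<Sum>j<n. v $ i * S $$ (i, j) * v $ j) + (1 - t) * (\<Sum>i<n. v $ i * v $ i)" .
      have p1: "t * (\<Sum>i<n. \<Sum>j<n. v $ i * S $$ (i, j) * v $ j) \<ge> 0"
        using psd[OF v(1)] t by simp
      have p2: "(\<Sum>i<n. v $ i * v $ i) \<ge> 0" by (intro sum_nonneg) simp
      have "(1 - t) * (\<Sum>i<n. v $ i * v $ i) = 0"
        using eq0 p1 p2 t1 by (smt (verit) mult_nonneg_nonneg)
      then have "(\<Sum>i<n. v $ i * v $ i) = 0" using t1 by simp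
      then have "\<forall>i\<in>{..<n}. v $ i * v $ i = 0" by (subst (asm) sum_nonneg_eq_0_iff) auto
      then have "v = 0\<^sub>v n" using v(1) by (intro eq_vecI) auto
      then show False using v(2) by blast
    qed
  qed
  have detM: "det (M t) = (\<Sum>p\<in>{p. p permutes {0..<n}}. signof p *
      (\<Prod>i = 0..<n. t * S $$ (i, p i) + (1 - t) * (if i = p i then 1 else 0)))" for t
    unfolding det_def'[OF Mc]
  proof (rule sum.cong[OF refl], rule arg_cong[where f="\<lambda>x. signof _ * x"], rule prod.cong[OF refl])
    fix p i assume "p \<in> {p. p permutes {0..<n}}" "i \<in> {0..<n}"
    then have "p i < n" by (auto dest: permutes_in_image)
    then show "M t $$ (i, p i) = t * S $$ (i, p i) + (1 - t) * (if i = p i then 1 else 0)"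
      using \<open>i \<in> {0..<n}\<close> unfolding M_def by simp
  qed
  have cont: "continuous_on {0..1} (\<lambda>t. det (M t))"
    unfolding detM by (intro continuous_intros)
  have M0: "M 0 = 1\<^sub>m n" unfolding M_def by (intro eq_matI) auto
  have M1: "M 1 = S" unfolding M_def using S by (intro eq_matI) auto
  show ?thesis
  proof (rule ccontr)
    assume "\<not> det S > 0"
    then have "det (M 1) \<le> 0" using M1 by simp
    moreover have "0 \<le> det (M 0)" using M0 by simp
    ultimately obtain t where "0 \<le> t" "t \<le> 1" "det (M t) = 0"
      using IVT2'[of "\<lambda>t. det (M t)" 1 0 0] cont by auto
    then show False using nz by blast
  qed
qed

theorem lemma1:
  fixes \<Delta> h \<gamma> \<sigma>2 :: real and N M :: nat and \<eta> :: "nat \<Rightarrow> real"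
    and u :: "real \<Rightarrow> real" and k :: "real \<Rightarrow> real \<Rightarrow> real"
    and ev :: "'h::{real_inner,complete_space} \<Rightarrow> real \<Rightarrow> real"
    and t :: "nat \<Rightarrow> real" and g_breve :: 'h
  assumes "\<Delta> > 0" and "h > 0" and "\<gamma> > 0" and "\<sigma>2 > 0"
    and causal: "\<forall>s<0. u s = 0"
    and kernel: "pos_def_kernel k"
    and rkhs: "is_rkhs k ev"
    and bounded: "\<forall>j\<in>{1..N+M}. bounded_linear (\<lambda>g. conv ev u g (t j))"
    and t_obs: "\<forall>i\<in>{1..N}. t i = real i * \<Delta>"
    and nonsing: "invertible_mat (cov_mat \<gamma> k u t (N+M))"
    and minimizer: "\<forall>g. crit ev u \<Delta> N \<gamma> \<sigma>2 h \<eta> g_breve \<le> crit ev u \<Delta> N \<gamma> \<sigma>2 h \<eta> g"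
  shows "is_MAP (cov_mat \<gamma> k u t (N+M)) N \<sigma>2 h \<eta> (vec (N+M) (\<lambda>j. conv ev u g_breve (t (j+1))))
       \<and> (\<forall>x. is_MAP (cov_mat \<gamma> k u t (N+M)) N \<sigma>2 h \<eta> x
              \<longrightarrow> x = vec (N+M) (\<lambda>j. conv ev u g_breve (t (j+1))))"
proof -
  note hpos = \<open>h > 0\<close> and gpos = \<open>\<gamma> > 0\<close> and spos = \<open>\<sigma>2 > 0\<close>
  define n where "n = N + M"
  define S where "S = cov_mat \<gamma> k u t n"
  define Lf where "Lf j g = conv ev u g (t (j+1))" for j g
  define xv where "xv g = vec n (\<lambda>j. Lf j g)" for g
  have xh_eq: "vec (N+M) (\<lambda>j. conv ev u g_breve (t (j+1))) = xv g_breve"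
    unfolding xv_def Lf_def n_def ..
  have Sdef: "cov_mat \<gamma> k u t (N+M) = S" unfolding S_def n_def ..
  have Lbl: "bounded_linear (Lf j)" if "j < n" for j
  proof -
    have "j + 1 \<in> {1..N+M}" using that unfolding n_def by simp
    then show ?thesis using bounded unfolding Lf_def by blast
  qed
  have "\<forall>j. \<exists>rj. j < n \<longrightarrow> (\<forall>g. Lf j g = inner rj g)"
    using riesz Lbl by blast
  then obtain r :: "nat \<Rightarrow> 'h" where r: "\<And>j g. j < n \<Longrightarrow> Lf j g = inner (r j) g"
    by metis
  have Sc: "S \<in> carrier_mat n n" unfolding S_def cov_mat_def by simp
  have dimS: "dim_row S = n" using Sc by simp
  have Sij: "S $$ (i,j) = inner (r i) (r j) / \<gamma>" if ij: "i < n" "j < n" for i j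
  proof -
    have "S $$ (i,j) = (1/\<gamma>) * (LINT \<xi>:{0..}|lborel. LINT \<tau>:{0..}|lborel.
        u (t (i+1) - \<xi>) * u (t (j+1) - \<tau>) * k \<xi> \<tau>)"
      unfolding S_def cov_mat_def using ij by simp
    also have "(LINT \<xi>:{0..}|lborel. LINT \<tau>:{0..}|lborel.
        u (t (i+1) - \<xi>) * u (t (j+1) - \<tau>) * k \<xi> \<tau>) = inner (r i) (r j)"
      by (rule gram_entry[OF kernel rkhs]) (use r ij in \<open>auto simp: Lf_def\<close>)
    finally show ?thesis by simp
  qed
  have invS: "invertible_mat S" using nonsing unfolding S_def n_def .
  then obtain B' where SB': "S * B' = 1\<^sub>m n" and B'S: "B' * S = 1\<^sub>m (dim_row B')"
    unfolding invertible_mat_def inverts_mat_def dimS by blast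
  have "dim_col B' = n" using arg_cong[OF SB', of dim_col] by simp
  moreover have "dim_row B' = n" using arg_cong[OF B'S, of dim_col] Sc by simp
  ultimately have "B' \<in> carrier_mat (dim_row S) (dim_row S) \<and> inverts_mat S B' \<and> inverts_mat B' S"
    using SB' B'S dimS unfolding inverts_mat_def by auto
  then have "mat_inv S \<in> carrier_mat (dim_row S) (dim_row S) \<and> inverts_mat S (mat_inv S) \<and> inverts_mat (mat_inv S) S"
    unfolding mat_inv_def by (rule someI)
  then have BC: "mat_inv S \<in> carrier_mat n n" and SB: "S * mat_inv S = 1\<^sub>m n"
    and BS: "mat_inv S * S = 1\<^sub>m n"
    unfolding inverts_mat_def dimS by auto
  define B where "B = mat_inv S"
  note BC = BC[folded B_def] and SB = SB[folded B_def] and BS = BS[folded B_def]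
  have SBy: "S *\<^sub>v (B *\<^sub>v y) = y" if "y \<in> carrier_vec n" for y :: "real vec"
  proof -
    have "S *\<^sub>v (B *\<^sub>v y) = (S * B) *\<^sub>v y" by (rule assoc_mult_mat_vec[OF Sc BC that, symmetric])
    also have "\<dots> = 1\<^sub>m n *\<^sub>v y" by (simp only: SB)
    also have "\<dots> = y" by (rule one_mult_mat_vec[OF that])
    finally show ?thesis .
  qed
  have BSy: "B *\<^sub>v (S *\<^sub>v y) = y" if "y \<in> carrier_vec n" for y :: "real vec"
  proof -
    have "B *\<^sub>v (S *\<^sub>v y) = (B * S) *\<^sub>v y" by (rule assoc_mult_mat_vec[OF BC Sc that, symmetric])
    also have "\<dots> = 1\<^sub>m n *\<^sub>v y" by (simp only: BS)
    also have "\<dots> = y" by (rule one_mult_mat_vec[OF that])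
    finally show ?thesis .
  qed
  have By_c: "B *\<^sub>v y \<in> carrier_vec n" for y :: "real vec"
    by (rule carrier_vecI) (use BC in simp)
  (* the minimal-norm interpolant *)
  define T where "T y = (\<Sum>j<n. ((B *\<^sub>v y) $ j / \<gamma>) *\<^sub>R r j)" for y
  have LT: "Lf i (T y) = y $ i" if y: "y \<in> carrier_vec n" and i: "i < n" for y :: "real vec" and i
  proof -
    have "Lf i (T y) = (\<Sum>j<n. ((B *\<^sub>v y) $ j / \<gamma>) * inner (r i) (r j))"
      unfolding T_def r[OF i] by (simp add: inner_sum_right)
    also have "\<dots> = (\<Sum>j<n. S $$ (i, j) * (B *\<^sub>v y) $ j)"
      by (rule sum.cong[OF refl]) (simp add: Sij i)
    also have "\<dots> = (S *\<^sub>v (B *\<^sub>v y)) $ i"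
      using mv_sum[OF Sc By_c i] by simp
    also have "\<dots> = y $ i" using SBy[OF y] by simp
    finally show ?thesis .
  qed
  have normT: "\<gamma> * (norm (T y))\<^sup>2 = y \<bullet> (B *\<^sub>v y)" if y: "y \<in> carrier_vec n" for y :: "real vec"
  proof -
    have "(norm (T y))\<^sup>2 = (\<Sum>j<n. ((B *\<^sub>v y) $ j / \<gamma>) * inner (r j) (T y))"
      unfolding power2_norm_eq_inner by (subst (1) T_def) (simp add: inner_sum_left)
    also have "\<dots> = (\<Sum>j<n. ((B *\<^sub>v y) $ j / \<gamma>) * y $ j)"
      by (rule sum.cong[OF refl]) (simp add: LT[OF y] r[symmetric])
    finally have "\<gamma> * (norm (T y))\<^sup>2 = (\<Sum>j<n. y $ j * (B *\<^sub>v y) $ j)"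
      using gpos by (simp add: sum_distrib_left algebra_simps)
    also have "\<dots> = y \<bullet> (B *\<^sub>v y)" using sp_sum[OF By_c] by simp
    finally show ?thesis .
  qed
  have minT: "(norm (T y))\<^sup>2 \<le> (norm g)\<^sup>2" if y: "y \<in> carrier_vec n" and g: "\<And>i. i < n \<Longrightarrow> Lf i g = y $ i" for y :: "real vec" and g
  proof -
    have "inner (g - T y) (T y) = (\<Sum>j<n. ((B *\<^sub>v y) $ j / \<gamma>) * inner (g - T y) (r j))"
      by (subst (2) T_def) (simp add: inner_sum_right)
    also have "\<dots> = 0"
    proof (rule sum.neutral, intro ballI)
      fix j assume j: "j \<in> {..<n}"
      have "inner (g - T y) (r j) = inner (r j) (g - T y)" by (rule inner_commute)
      also have "\<dots> = Lf j g - Lf j (T y)" using j by (simp add: r inner_diff_right)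
      also have "\<dots> = 0" using g LT[OF y] j by simp
      finally show "((B *\<^sub>v y) $ j / \<gamma>) * inner (g - T y) (r j) = 0" by simp
    qed
    finally have o: "inner (g - T y) (T y) = 0" .
    have "(norm g)\<^sup>2 = (norm ((g - T y) + T y))\<^sup>2" by simp
    also have "\<dots> = inner (g - T y) (g - T y) + 2 * inner (g - T y) (T y) + inner (T y) (T y)"
      unfolding power2_norm_eq_inner
      by (simp only: inner_add_left inner_add_right inner_commute[of "T y" "g - T y"] mult_2 add.assoc)
    finally show ?thesis using o by (simp add: power2_norm_eq_inner)
  qed
  have Tmid: "T (vec n (\<lambda>i. (x $ i + z $ i) / 2)) = (1/2) *\<^sub>R (T x + T z)"
    if x: "x \<in> carrier_vec n" and z: "z \<in> carrier_vec n" for x z :: "real vec"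
  proof -
    have vc: "vec n (\<lambda>i. (x $ i + z $ i) / 2) \<in> carrier_vec n" by simp
    have e: "(B *\<^sub>v vec n (\<lambda>i. (x $ i + z $ i) / 2)) $ j = ((B *\<^sub>v x) $ j + (B *\<^sub>v z) $ j) / 2"
      if j: "j < n" for j
    proof -
      have "(B *\<^sub>v vec n (\<lambda>i. (x $ i + z $ i) / 2)) $ j = (\<Sum>i<n. B $$ (j, i) * ((x $ i + z $ i) / 2))"
        using mv_sum[OF BC vc j] by simp
      also have "\<dots> = (\<Sum>i<n. (B $$ (j, i) * x $ i + B $$ (j, i) * z $ i) / 2)"
        by (rule sum.cong[OF refl]) (simp add: distrib_left)
      also have "\<dots> = (\<Sum>i<n. B $$ (j, i) * x $ i + B $$ (j, i) * z $ i) / 2"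
        by (rule sum_divide_distrib[symmetric])
      also have "\<dots> = ((\<Sum>i<n. B $$ (j, i) * x $ i) + (\<Sum>i<n. B $$ (j, i) * z $ i)) / 2"
        by (simp only: sum.distrib)
      also have "\<dots> = ((B *\<^sub>v x) $ j + (B *\<^sub>v z) $ j) / 2"
        using mv_sum[OF BC x j] mv_sum[OF BC z j] by simp
      finally show ?thesis .
    qed
    have "T (vec n (\<lambda>i. (x $ i + z $ i) / 2)) = (\<Sum>j<n. (1/2) *\<^sub>R (((B *\<^sub>v x) $ j / \<gamma>) *\<^sub>R r j + ((B *\<^sub>v z) $ j / \<gamma>) *\<^sub>R r j))"
      unfolding T_def
    proof (rule sum.cong[OF refl])
      fix j assume "j \<in> {..<n}"
      then have j: "j < n" by simp
      have sc: "(((B *\<^sub>v x) $ j + (B *\<^sub>v z) $ j) / 2) / \<gamma> = (1/2) * ((B *\<^sub>v x) $ j / \<gamma>) + (1/2) * ((B *\<^sub>v z) $ j / \<gamma>)"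
        by (simp add: add_divide_distrib)
      show "((B *\<^sub>v vec n (\<lambda>i. (x $ i + z $ i) / 2)) $ j / \<gamma>) *\<^sub>R r j
          = (1/2) *\<^sub>R (((B *\<^sub>v x) $ j / \<gamma>) *\<^sub>R r j + ((B *\<^sub>v z) $ j / \<gamma>) *\<^sub>R r j)"
        unfolding e[OF j] sc by (simp only: scaleR_add_left scaleR_add_right scaleR_scaleR)
    qed
    also have "\<dots> = (1/2) *\<^sub>R (\<Sum>j<n. ((B *\<^sub>v x) $ j / \<gamma>) *\<^sub>R r j + ((B *\<^sub>v z) $ j / \<gamma>) *\<^sub>R r j)"
      by (rule scaleR_right.sum[symmetric])
    also have "\<dots> = (1/2) *\<^sub>R (T x + T z)"
      unfolding T_def by (simp only: sum.distrib)
    finally show ?thesis .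
  qed
  have xvT: "xv (T y) = y" if y: "y \<in> carrier_vec n" for y :: "real vec"
    unfolding xv_def using y LT[OF y] by (intro eq_vecI) auto
  have xv_c: "xv g \<in> carrier_vec n" for g unfolding xv_def by simp
  have psd: "(\<Sum>i<n. \<Sum>j<n. v $ i * S $$ (i, j) * v $ j) \<ge> 0" if "v \<in> carrier_vec n" for v :: "real vec"
  proof -
    define w where "w = (\<Sum>i<n. v $ i *\<^sub>R r i)"
    have "inner w w = (\<Sum>i<n. \<Sum>j<n. v $ i * (v $ j * inner (r j) (r i)))"
      by (simp only: w_def inner_sum_left inner_scaleR_left inner_sum_right inner_scaleR_right sum_distrib_left mult.assoc)
    also have "\<dots> = (\<Sum>i<n. \<Sum>j<n. v $ i * v $ j * inner (r i) (r j))"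
      by (rule sum.cong[OF refl], rule sum.cong[OF refl]) (metis inner_commute mult.assoc)
    also have "\<dots> = \<gamma> * (\<Sum>i<n. \<Sum>j<n. v $ i * S $$ (i, j) * v $ j)"
      using gpos by (simp add: Sij sum_distrib_left algebra_simps)
    finally have "\<gamma> * (\<Sum>i<n. \<Sum>j<n. v $ i * S $$ (i, j) * v $ j) \<ge> 0" by (metis inner_ge_zero)
    then show ?thesis using gpos by (simp add: zero_le_mult_iff)
  qed
  have inj: "v = 0\<^sub>v n" if v: "v \<in> carrier_vec n" and Sv: "S *\<^sub>v v = 0\<^sub>v n" for v :: "real vec"
  proof (rule eq_vecI)
    show "dim_vec v = dim_vec (0\<^sub>v n)" using v by simp
    fix i assume "i < dim_vec (0\<^sub>v n)"
    then have i: "i < n" by simp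
    have "v $ i = (B *\<^sub>v (S *\<^sub>v v)) $ i" using BSy[OF v] by simp
    also have "\<dots> = (\<Sum>j<n. B $$ (i, j) * (0\<^sub>v n) $ j)" unfolding Sv using mv_sum[OF BC _ i] by simp
    also have "\<dots> = 0" by (rule sum.neutral) simp
    finally show "v $ i = 0\<^sub>v n $ i" using i by simp
  qed
  have detS: "det S > 0" by (rule det_pos[OF Sc psd inj])
  define \<Phi> where "\<Phi> i x = (LBINT z:{\<eta> i..<\<eta> i + h}. exp (- (z - x)\<^sup>2 / (2*\<sigma>2)))" for i x
  have \<Phi>pos: "\<Phi> i x > 0" for i x
    unfolding \<Phi>_def using logconc(2)[OF spos, of "\<eta> i" "\<eta> i + h"] hpos by simp
  have \<Phi>conv: "convex_on UNIV (\<lambda>x. - ln (\<Phi> i x))" for i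
    unfolding \<Phi>_def using logconc(1)[OF spos, of "\<eta> i" "\<eta> i + h"] hpos by simp
  define P where "P y = (\<Sum>i=1..N. ln (\<Phi> i (y $ (i - 1))))" for y :: "real vec"
  define J where "J y = y \<bullet> (B *\<^sub>v y) - 2 * P y" for y
  define K where "K = sqrt ((2*pi) ^ n * det S) * sqrt (2*pi*\<sigma>2) ^ N"
  have Kpos: "K > 0" unfolding K_def using detS spos by simp
  have post: "post_unnorm S N \<sigma>2 h \<eta> y = exp (- J y / 2) / K" for y :: "real vec"
  proof -
    have "likelihood N \<sigma>2 h \<eta> y = (\<Prod>i=1..N. \<Phi> i (y $ (i - 1)) / sqrt (2*pi*\<sigma>2))"
      unfolding likelihood_def \<Phi>_def by simp
    also have "\<dots> = (\<Prod>i=1..N. \<Phi> i (y $ (i - 1))) / sqrt (2*pi*\<sigma>2) ^ N"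
      by (simp add: prod_dividef)
    also have "(\<Prod>i=1..N. \<Phi> i (y $ (i - 1))) = exp (P y)"
      unfolding P_def by (simp add: exp_sum \<Phi>pos)
    finally have lik: "likelihood N \<sigma>2 h \<eta> y = exp (P y) / sqrt (2*pi*\<sigma>2) ^ N" .
    have "post_unnorm S N \<sigma>2 h \<eta> y = exp (- (y \<bullet> (B *\<^sub>v y)) / 2) / sqrt ((2*pi) ^ n * det S) * (exp (P y) / sqrt (2*pi*\<sigma>2) ^ N)"
      unfolding post_unnorm_def gauss_density_def lik B_def dimS ..
    also have "\<dots> = (exp (- (y \<bullet> (B *\<^sub>v y)) / 2) * exp (P y)) / K"
      unfolding K_def by simp
    also have "exp (- (y \<bullet> (B *\<^sub>v y)) / 2) * exp (P y) = exp (- J y / 2)"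
      unfolding J_def exp_add[symmetric] by (simp add: field_simps)
    finally show ?thesis .
  qed
  have post_le: "post_unnorm S N \<sigma>2 h \<eta> x \<le> post_unnorm S N \<sigma>2 h \<eta> y \<longleftrightarrow> J y \<le> J x" for x y :: "real vec"
    unfolding post using Kpos by (simp add: divide_le_cancel)
  have crit_eq: "crit ev u \<Delta> N \<gamma> \<sigma>2 h \<eta> g = - 2 * P (xv g) + \<gamma> * (norm g)\<^sup>2" for g
  proof -
    have "(\<Sum>i=1..N. ln (LBINT z:{\<eta> i..<\<eta> i + h}. exp (- (z - conv ev u g (real i * \<Delta>))\<^sup>2 / (2*\<sigma>2))))
        = P (xv g)"
      unfolding P_def
    proof (rule sum.cong[OF refl])
      fix i assume i: "i \<in> {1..N}"
      then have "conv ev u g (real i * \<Delta>) = xv g $ (i - 1)"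
        using t_obs unfolding xv_def Lf_def n_def by auto
      then show "ln (LBINT z:{\<eta> i..<\<eta> i + h}. exp (- (z - conv ev u g (real i * \<Delta>))\<^sup>2 / (2*\<sigma>2)))
          = ln (\<Phi> i (xv g $ (i - 1)))" unfolding \<Phi>_def by simp
    qed
    then show ?thesis unfolding crit_def by simp
  qed
  have JT: "J y = crit ev u \<Delta> N \<gamma> \<sigma>2 h \<eta> (T y)" if y: "y \<in> carrier_vec n" for y :: "real vec"
    unfolding crit_eq xvT[OF y] J_def normT[OF y] by simp
  have Jnorm: "J y = \<gamma> * (norm (T y))\<^sup>2 - 2 * P y" if y: "y \<in> carrier_vec n" for y :: "real vec"
    unfolding J_def normT[OF y] ..
  have Jle: "J (xv g) \<le> crit ev u \<Delta> N \<gamma> \<sigma>2 h \<eta> g" for g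
  proof -
    have "(norm (T (xv g)))\<^sup>2 \<le> (norm g)\<^sup>2" by (rule minT[OF xv_c]) (simp add: xv_def)
    then show ?thesis unfolding Jnorm[OF xv_c] crit_eq using gpos by simp
  qed
  define xh where "xh = xv g_breve"
  have xh_c: "xh \<in> carrier_vec n" unfolding xh_def by (rule xv_c)
  have xh_min: "J xh \<le> J y" if y: "y \<in> carrier_vec n" for y :: "real vec"
    using Jle[of g_breve] minimizer JT[OF y] unfolding xh_def by (metis order_trans)
  have MAP: "is_MAP S N \<sigma>2 h \<eta> xh"
    unfolding is_MAP_def dimS using xh_c xh_min post_le by blast
  have uniq: "x = xh" if "is_MAP S N \<sigma>2 h \<eta> x" for x
  proof -
    have x: "x \<in> carrier_vec n" and "post_unnorm S N \<sigma>2 h \<eta> xh \<le> post_unnorm S N \<sigma>2 h \<eta> x"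
      using that xh_c unfolding is_MAP_def dimS by auto
    then have Jx: "J x \<le> J xh" using post_le by blast
    define m where "m = vec n (\<lambda>i. (x $ i + xh $ i) / 2)"
    have m_c: "m \<in> carrier_vec n" unfolding m_def by simp
    have Tm: "T m = (1/2) *\<^sub>R (T x + T xh)" unfolding m_def by (rule Tmid[OF x xh_c])
    have Pm: "P x + P xh \<le> 2 * P m"
    proof -
      have "(\<Sum>i=1..N. ln (\<Phi> i (x $ (i - 1))) + ln (\<Phi> i (xh $ (i - 1)))) \<le> (\<Sum>i=1..N. 2 * ln (\<Phi> i (m $ (i - 1))))"
      proof (rule sum_mono)
        fix i assume i: "i \<in> {1..N}"
        then have i1: "i - 1 < n" unfolding n_def by auto
        have "- ln (\<Phi> i ((1 - 1/2) *\<^sub>R (x $ (i - 1)) + (1/2) *\<^sub>R (xh $ (i - 1))))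
            \<le> (1 - 1/2) * (- ln (\<Phi> i (x $ (i - 1)))) + (1/2) * (- ln (\<Phi> i (xh $ (i - 1))))"
          by (rule convex_onD[OF \<Phi>conv]) auto
        moreover have "(1 - 1/2) *\<^sub>R (x $ (i - 1)) + (1/2) *\<^sub>R (xh $ (i - 1)) = m $ (i - 1)"
          unfolding m_def using i1 by simp
        ultimately show "ln (\<Phi> i (x $ (i - 1))) + ln (\<Phi> i (xh $ (i - 1))) \<le> 2 * ln (\<Phi> i (m $ (i - 1)))"
          by simp
      qed
      then show ?thesis unfolding P_def by (simp add: sum.distrib sum_distrib_left)
    qed
    have par: "(norm ((1/2) *\<^sub>R (a + b)))\<^sup>2 = ((norm a)\<^sup>2 + (norm b)\<^sup>2) / 2 - (norm (a - b))\<^sup>2 / 4" for a b :: 'h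
    proof -
      have e1: "(norm ((1/2) *\<^sub>R (a + b)))\<^sup>2 = inner (a + b) (a + b) / 4"
        by (simp add: power_divide power2_norm_eq_inner[symmetric])
      have e2: "inner (a + b) (a + b) = inner a a + 2 * inner a b + inner b b"
        by (simp add: inner_add inner_commute)
      have e3: "inner (a - b) (a - b) = inner a a - 2 * inner a b + inner b b"
        by (simp add: inner_diff inner_commute)
      show ?thesis unfolding e1 unfolding power2_norm_eq_inner e2 e3 by (simp add: field_simps)
    qed
    have "J xh \<le> J m" by (rule xh_min[OF m_c])
    also have "J m = \<gamma> * (((norm (T x))\<^sup>2 + (norm (T xh))\<^sup>2) / 2 - (norm (T x - T xh))\<^sup>2 / 4) - 2 * P m"
      unfolding Jnorm[OF m_c] Tm par ..
    finally have "J xh \<le> \<gamma> * (((norm (T x))\<^sup>2 + (norm (T xh))\<^sup>2) / 2 - (norm (T x - T xh))\<^sup>2 / 4) - 2 * P m" .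
    then have "\<gamma> * (norm (T x - T xh))\<^sup>2 \<le> 0"
      using Jx Pm Jnorm[OF x] Jnorm[OF xh_c] by (simp add: algebra_simps)
    then have "T x = T xh" using gpos by (simp add: mult_le_0_iff)
    then show ?thesis using xvT[OF x] xvT[OF xh_c] by metis
  qed
  show ?thesis unfolding Sdef xh_eq using MAP uniq unfolding xh_def by blast
qed

end
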